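(* There exists a constant $C=C(d)$ such that for every $\omega\in\Omega$, $(x,t)\in\mathbb R^{d+1}$, $n\in\mathbb Z$ and $u\in S(G_n(x,t),\omega)$, $$\inf_{\partial_pG_n(x,t)}u\le\inf_{G_n(x,t)}u+C\,3^{2n}\mu(G_n(x,t),\omega)^{1/(d+1)}.$$
   Context: $\Omega$ is a set of functions $F:\mathbb S^d\times\mathbb R^{d+1}\to\mathbb R$ ($\mathbb S^d$ = real symmetric $d\times d$ matrices), written $F(M,y,s,\omega)$, each uniformly elliptic: $\mathcal M^-(M-N)\le F(M,y,s,\omega)-F(N,y,s,\omega)\le\mathcal M^+(M-N)$ with Pucci operators $\mathcal M^\pm$ for constants $0<\lambda\le\Lambda$, and with $F(M,\cdot,\cdot,\omega)$ bounded and continuous. For $Q=Q'\times(t_1,t_2]$, $\partial_pQ=(Q'\times\{t_1\})\cup(\partial Q'\times[t_1,t_2))$. $S(Q,\omega)$ is the set of $u\in C(Q)$ with $u_t+F(D^2u,x,t,\omega)\ge0$ in $Q$ in the viscosity sense. Monotone envelope on $Q$: $\Gamma^u(x,t)=\sup\{p\cdot x+h: p\cdot y+h\le u(y,s)\ \forall (y,s)\in Q,\ s\le t\}$. Parabolic subdifferential: $\mathcal P((x_0,t_0);w)=\{(p,h):\min_{(x,s)\in Q,s\le t_0}(w(x,s)-p\cdot x)=w(x_0,t_0)-p\cdot x_0=h\}$, $\mathcal P(E;w)=\bigcup_{(x_0,t_0)\in E}\mathcal P((x_0,t_0);w)$. $\mu(Q,\omega)=|Q|^{-1}\sup\{|\mathcal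 P(Q;\Gamma^u)|:u\in S(Q,\omega)\}$ with $|\cdot|$ Lebesgue measure on $\mathbb R^{d+1}$. $G_n=[-\tfrac12 3^n,\tfrac12 3^n)^d\times(0,3^{2n}]$ and $G_n(x,t)=(3^n\lfloor3^{-n}x+\tfrac12\rfloor,3^{2n}\lfloor3^{-2n}t\rfloor)+G_n$ (floor taken componentwise). *)

theory Defs
  imports "HOL-Analysis.Analysis"
begin

(* Space-time points are pairs (x,t) :: real^'n * real; d = CARD('n).
   Matrices are real^'n^'n; S^d = symmetric ones. *)

type_synonym 'n mat = "real^'n^'n"
type_synonym 'n coeff = "'n mat \<Rightarrow> real^'n \<Rightarrow> real \<Rightarrow> real"

definition symm :: "'n::finite mat \<Rightarrow> bool" where
  "symm M \<longleftrightarrow> transpose M = M"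

definition ell_mat :: "real \<Rightarrow> real \<Rightarrow> 'n::finite mat \<Rightarrow> bool" where
  "ell_mat lam Lam A \<longleftrightarrow> symm A \<and>
     (\<forall>\<xi>::real^'n. lam * (\<xi> \<bullet> \<xi>) \<le> \<xi> \<bullet> (A *v \<xi>) \<and> \<xi> \<bullet> (A *v \<xi>) \<le> Lam * (\<xi> \<bullet> \<xi>))"

definition pucci_plus :: "real \<Rightarrow> real \<Rightarrow> 'n::finite mat \<Rightarrow> real" where
  "pucci_plus lam Lam M = Sup {- trace (A ** M) | A. ell_mat lam Lam A}"

definition pucci_minus :: "real \<Rightarrow> real \<Rightarrow> 'n::finite mat \<Rightarrow> real" where
  "pucci_minus lam Lam M = Inf {- trace (A ** M) | A. ell_mat lam Lam A}"

definition Omega :: "real \<Rightarrow> real \<Rightarrow> ('n::finite coeff) set" where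
  "Omega lam Lam = {F.
     (\<forall>M N y s. symm M \<longrightarrow> symm N \<longrightarrow>
        pucci_minus lam Lam (M - N) \<le> F M y s - F N y s \<and>
        F M y s - F N y s \<le> pucci_plus lam Lam (M - N)) \<and>
     (\<forall>M. symm M \<longrightarrow> bounded (range (\<lambda>(y,s). F M y s)) \<and>
                     continuous_on UNIV (\<lambda>(y,s). F M y s))}"

definition cyl :: "(real^'n::finite) set \<Rightarrow> real \<Rightarrow> real \<Rightarrow> ((real^'n) \<times> real) set" where
  "cyl Q' t1 t2 = Q' \<times> {t1<..t2}"

definition par_bdry :: "(real^'n::finite) set \<Rightarrow> real \<Rightarrow> real \<Rightarrow> ((real^'n) \<times> real) set" where
  "par_bdry Q' t1 t2 = (Q' \<times> {t1}) \<union> (frontier Q' \<times> {t1..<t2})"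

(* Parabolic second-order subjet (Crandall-Ishii-Lions P^{2,-}) of u at (x0,t0):
   u(x,t) >= u(x0,t0) + p.(x-x0) + 1/2 (x-x0).X(x-x0) + b (t-t0) + o(|x-x0|^2+|t-t0|) *)
definition par_subjet :: "((real^'n::finite) \<times> real \<Rightarrow> real) \<Rightarrow> real^'n \<Rightarrow> real
      \<Rightarrow> real \<Rightarrow> real^'n \<Rightarrow> 'n mat \<Rightarrow> bool" where
  "par_subjet u x0 t0 b p X \<longleftrightarrow>
     (\<forall>e>0. \<exists>\<delta>>0. \<forall>x t. dist (x,t) (x0,t0) < \<delta> \<longrightarrow>
        u (x,t) \<ge> u (x0,t0) + p \<bullet> (x - x0) + (1/2) * ((x - x0) \<bullet> (X *v (x - x0)))
                  + b * (t - t0) - e * (norm (x - x0)^2 + \<bar>t - t0\<bar>))"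

(* u_t + F(D^2u,x,t) >= 0 in the viscosity sense in (the interior of) Q *)
definition visc_super :: "'n::finite coeff \<Rightarrow> ((real^'n) \<times> real) set
      \<Rightarrow> ((real^'n) \<times> real \<Rightarrow> real) \<Rightarrow> bool" where
  "visc_super F Q u \<longleftrightarrow>
     (\<forall>x0 t0 b p X. (x0,t0) \<in> interior Q \<longrightarrow> symm X \<longrightarrow> par_subjet u x0 t0 b p X
        \<longrightarrow> b + F X x0 t0 \<ge> 0)"

definition Ssup :: "((real^'n::finite) \<times> real) set \<Rightarrow> 'n coeff \<Rightarrow> ((real^'n) \<times> real \<Rightarrow> real) set" where
  "Ssup Q F = {u. continuous_on (closure Q) u \<and> visc_super F Q u}"

definition mon_env :: "((real^'n::finite) \<times> real) set \<Rightarrow> ((real^'n) \<times> real \<Rightarrow> real)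
      \<Rightarrow> (real^'n) \<times> real \<Rightarrow> real" where
  "mon_env Q u = (\<lambda>(x,t). Sup {p \<bullet> x + h | p h.
       \<forall>y s. (y,s) \<in> Q \<longrightarrow> s \<le> t \<longrightarrow> p \<bullet> y + h \<le> u (y,s)})"

definition par_subdiff :: "((real^'n::finite) \<times> real) set \<Rightarrow> (real^'n) \<times> real
      \<Rightarrow> ((real^'n) \<times> real \<Rightarrow> real) \<Rightarrow> ((real^'n) \<times> real) set" where
  "par_subdiff Q z w = (case z of (x0,t0) \<Rightarrow>
     {(p,h). (x0,t0) \<in> Q \<and> h = w (x0,t0) - p \<bullet> x0 \<and>
             (\<forall>x s. (x,s) \<in> Q \<longrightarrow> s \<le> t0 \<longrightarrow> w (x0,t0) - p \<bullet> x0 \<le> w (x,s) - p \<bullet> x)})"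

definition par_subdiff_set :: "((real^'n::finite) \<times> real) set \<Rightarrow> ((real^'n) \<times> real) set
      \<Rightarrow> ((real^'n) \<times> real \<Rightarrow> real) \<Rightarrow> ((real^'n) \<times> real) set" where
  "par_subdiff_set Q E w = (\<Union>z\<in>E. par_subdiff Q z w)"

definition leb_outer :: "('a::euclidean_space) set \<Rightarrow> ereal" where
  "leb_outer S = enn2ereal (INF T\<in>{T \<in> sets lebesgue. S \<subseteq> T}. emeasure lebesgue T)"

definition mu :: "((real^'n::finite) \<times> real) set \<Rightarrow> 'n coeff \<Rightarrow> ereal" where
  "mu Q F = ereal (1 / measure lebesgue Q) *
     (SUP u\<in>Ssup Q F. leb_outer (par_subdiff_set Q Q (mon_env Q u)))"

definition Gcenter :: "int \<Rightarrow> real^'n::finite \<Rightarrow> real^'n" where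
  "Gcenter n x = (\<chi> i. 3 powi n * of_int \<lfloor>x $ i / 3 powi n + 1/2\<rfloor>)"

definition Gtime :: "int \<Rightarrow> real \<Rightarrow> real" where
  "Gtime n t = 3 powi (2*n) * of_int \<lfloor>t / 3 powi (2*n)\<rfloor>"

definition Gsp :: "int \<Rightarrow> real^'n::finite \<Rightarrow> (real^'n) set" where
  "Gsp n x = {y. \<forall>i. - (1/2) * 3 powi n \<le> y $ i - Gcenter n x $ i \<and>
                        y $ i - Gcenter n x $ i < (1/2) * 3 powi n}"

definition Gcyl :: "int \<Rightarrow> (real^'n::finite) \<times> real \<Rightarrow> ((real^'n) \<times> real) set" where
  "Gcyl n z = (case z of (x,t) \<Rightarrow> cyl (Gsp n x) (Gtime n t) (Gtime n t + 3 powi (2*n)))"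

definition Gpar_bdry :: "int \<Rightarrow> (real^'n::finite) \<times> real \<Rightarrow> ((real^'n) \<times> real) set" where
  "Gpar_bdry n z = (case z of (x,t) \<Rightarrow> par_bdry (Gsp n x) (Gtime n t) (Gtime n t + 3 powi (2*n)))"

end

theory Submission
  imports Defs
begin


lemma TL:
  fixes f :: "'a::topological_space \<times> real \<Rightarrow> real"
  assumes cont: "continuous_on K f" and yK: "(y,s) \<in> K" and as: "a < s"
    and hyp: "\<And>s'. a < s' \<Longrightarrow> s' < s \<Longrightarrow> (y,s') \<in> K \<and> v \<le> f (y,s')"
  shows "v \<le> f (y,s)"
proof -
  define a' where "a' = (a+s)/2"
  have as': "a' < s" "a < a'" using as by (auto simp: a'_def)
  have sub: "Pair y ` {a'..s} \<subseteq> K" using yK hyp as' by (force simp: le_less)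
  have c2: "continuous_on {a'..s} (\<lambda>s'. f (y,s'))"
    by (rule continuous_on_compose2[OF cont _ sub]) (intro continuous_intros)
  have "((\<lambda>s'. f (y,s')) \<longlongrightarrow> f (y,s)) (at s within {a'..s})"
    using c2 as' by (simp add: continuous_on_def)
  then have lim: "((\<lambda>s'. f (y,s')) \<longlongrightarrow> f (y,s)) (at_left s)"
    using at_within_Icc_at_left[OF as'(1)] by simp
  show ?thesis
  proof (rule tendsto_lowerbound[OF lim])
    show "\<forall>\<^sub>F x in at_left s. v \<le> f (y, x)"
      using eventually_at_left_real[OF as] hyp
      by (auto elim!: eventually_mono)
  qed simp
qed

lemma touch:
  fixes u :: "(real^'n::finite) \<times> real \<Rightarrow> real" and c p :: "real^'n"
  assumes Kc: "compact K" and QK: "Q \<subseteq> K" and cont: "continuous_on K u"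
    and z0: "z0 \<in> Q" "u z0 - p \<bullet> (fst z0 - c) \<le> h'"
    and out: "\<And>z. z \<in> K \<Longrightarrow> z \<notin> Q \<Longrightarrow> u z - p \<bullet> (fst z - c) > h'"
    and tQ: "\<And>y s. (y,s) \<in> Q \<Longrightarrow> \<exists>a<s. \<forall>s'. a < s' \<and> s' < s \<longrightarrow> (y,s') \<in> Q"
  shows "(p, h' - p \<bullet> c) \<in> par_subdiff_set Q Q (mon_env Q u)"
proof -
  define g where "g = (\<lambda>z. u z - p \<bullet> (fst z - c))"
  have gc: "continuous_on K g" unfolding g_def
    by (intro continuous_intros cont)
  define S where "S = {z \<in> K. g z \<le> h'}"
  have "closed S" unfolding S_def
    by (rule continuous_on_closed_Collect_le[OF gc continuous_on_const compact_imp_closed[OF Kc]])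
  then have Sc: "compact S" using Kc unfolding S_def
    by (metis (no_types, lifting) S_def compact_Int_closed inf.absorb2 mem_Collect_eq subsetI)
  have Sne: "S \<noteq> {}" using z0 QK unfolding S_def g_def by (metis (mono_tags, lifting) empty_iff mem_Collect_eq subsetD)
  obtain w where wS: "w \<in> S" and wmin: "\<And>z. z \<in> S \<Longrightarrow> snd w \<le> snd z"
    using continuous_attains_inf[OF Sc Sne continuous_on_snd[OF continuous_on_id]]
    by auto
  obtain x0 t0 where w: "w = (x0,t0)" by force
  have wQ: "w \<in> Q"
  proof (rule ccontr)
    assume "w \<notin> Q"
    moreover have "w \<in> K" using wS unfolding S_def by simp
    ultimately have "g w > h'" using out[of w] unfolding g_def by simp
    then show False using wS unfolding S_def by auto
  qed
  have less: "g (y,s) > h'" if "(y,s) \<in> Q" "s < t0" for y s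
  proof (rule ccontr)
    assume "\<not> h' < g (y, s)"
    then have "g (y,s) \<le> h'" by simp
    moreover have "(y,s) \<in> K" using that(1) QK by (rule subsetD[rotated])
    ultimately have "(y,s) \<in> S" unfolding S_def by simp
    then have "snd w \<le> s" using wmin[of "(y,s)"] by simp
    then show False using that(2) w by simp
  qed
  have ge: "g (y,s) \<ge> h'" if ys: "(y,s) \<in> Q" "s \<le> t0" for y s
  proof (cases "s < t0")
    case True show ?thesis using less[OF ys(1) True] by simp
  next
    case False
    then have st: "s = t0" using ys(2) by simp
    obtain a where a: "a < s" "\<And>s'. a < s' \<Longrightarrow> s' < s \<Longrightarrow> (y,s') \<in> Q"
      using tQ[OF ys(1)] by blast
    show ?thesis
    proof (rule TL[OF gc _ a(1)])
      show "(y,s) \<in> K" by (rule subsetD[OF QK ys(1)])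
      fix s' assume "a < s'" "s' < s"
      then have yQ: "(y,s') \<in> Q" by (rule a(2))
      have "h' < g (y,s')" using less[OF yQ] \<open>s' < s\<close> st by simp
      then show "(y, s') \<in> K \<and> h' \<le> g (y, s')"
        using subsetD[OF QK yQ] by simp
    qed
  qed
  have geq: "g (x0,t0) = h'" using ge[of x0 t0] wQ wS w unfolding S_def by auto
  define E where "E = (\<lambda>x t. {q \<bullet> x + k | q k. \<forall>y s. (y,s) \<in> Q \<longrightarrow> s \<le> t \<longrightarrow> q \<bullet> y + k \<le> u (y,s)})"
  have env: "mon_env Q u (x,t) = Sup (E x t)" for x t
    unfolding mon_env_def E_def by simp
  have lin: "p \<bullet> y + (h' - p \<bullet> c) \<le> u (y,s)" if "(y,s) \<in> Q" "s \<le> t0" for y s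
    using ge[OF that] unfolding g_def by (simp add: inner_diff_right)
  have bdd: "bdd_above (E x t)" if "(x,t) \<in> Q" for x t
    unfolding E_def bdd_above_def using that by blast
  have memE: "p \<bullet> y + (h' - p \<bullet> c) \<in> E y s" if "s \<le> t0" for y s
    unfolding E_def using lin that by fastforce
  have G0: "mon_env Q u (x0,t0) = u (x0,t0)"
  proof -
    have "p \<bullet> x0 + (h' - p \<bullet> c) = u (x0,t0)" using geq unfolding g_def
      by (simp add: inner_diff_right)
    then have "u (x0,t0) \<in> E x0 t0" using memE[of t0 x0] by simp
    moreover have "\<And>v. v \<in> E x0 t0 \<Longrightarrow> v \<le> u (x0,t0)" unfolding E_def using wQ w by blast
    ultimately show ?thesis unfolding env by (intro cSup_eq_maximum)
  qed
  have G1: "mon_env Q u (y,s) \<ge> p \<bullet> y + (h' - p \<bullet> c)" if "(y,s) \<in> Q" "s \<le> t0" for y s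
    unfolding env using memE[OF that(2)] bdd[OF that(1)] by (rule cSup_upper)
  have "(p, h' - p \<bullet> c) \<in> par_subdiff Q (x0,t0) (mon_env Q u)"
    unfolding par_subdiff_def using wQ w G0 G1 geq unfolding g_def
    by (auto simp: inner_diff_right) (smt (verit) G1)
  then show ?thesis unfolding par_subdiff_set_def using wQ w by auto
qed



lemma prodB:
  fixes v :: "real^'n::finite"
  assumes "\<And>i. v$i = r"
  shows "(\<Prod>b\<in>Basis. v \<bullet> b) = r ^ CARD('n)"
proof -
  have "\<forall>b\<in>(Basis::(real^'n) set). v \<bullet> b = r" using assms by (auto simp: Basis_vec_def inner_axis)
  then have "(\<Prod>b\<in>Basis. v \<bullet> b) = (\<Prod>b\<in>(Basis::(real^'n) set). r)" by (intro prod.cong) auto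
  also have "\<dots> = r ^ CARD('n)" using DIM_cart[where 'a=real and 'b='n] by simp
  finally show ?thesis .
qed

lemma Qborel:
  fixes c :: "real^'n::finite"
  shows "{z::(real^'n)\<times>real. (\<forall>i. lo i \<le> fst z $ i \<and> fst z $ i < hi i) \<and> t1 < snd z \<and> snd z \<le> t2} \<in> sets borel"
proof -
  have c1: "closed {z::(real^'n)\<times>real. \<forall>i. lo i \<le> fst z $ i}"
  proof -
    have "{z::(real^'n)\<times>real. \<forall>i. lo i \<le> fst z $ i} = (\<Inter>i. {z. lo i \<le> fst z $ i})" by auto
    moreover have "closed (\<Inter>i. {z::(real^'n)\<times>real. lo i \<le> fst z $ i})"
      by (intro closed_INT ballI closed_Collect_le continuous_intros)
    ultimately show ?thesis by simp
  qed
  have o1: "open {z::(real^'n)\<times>real. \<forall>i. fst z $ i < hi i}"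
  proof -
    have "{z::(real^'n)\<times>real. \<forall>i. fst z $ i < hi i} = (\<Inter>i\<in>UNIV. {z. fst z $ i < hi i})" by auto
    moreover have "open (\<Inter>i\<in>UNIV. {z::(real^'n)\<times>real. fst z $ i < hi i})"
      by (intro open_INT finite ballI open_Collect_less continuous_intros)
    ultimately show ?thesis by simp
  qed
  have o2: "open {z::(real^'n)\<times>real. t1 < snd z}" by (intro open_Collect_less continuous_intros)
  have c2: "closed {z::(real^'n)\<times>real. snd z \<le> t2}" by (intro closed_Collect_le continuous_intros)
  have eq: "{z::(real^'n)\<times>real. (\<forall>i. lo i \<le> fst z $ i \<and> fst z $ i < hi i) \<and> t1 < snd z \<and> snd z \<le> t2}
     = {z. \<forall>i. lo i \<le> fst z $ i} \<inter> {z. \<forall>i. fst z $ i < hi i} \<inter> {z. t1 < snd z} \<inter> {z. snd z \<le> t2}"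
    by auto
  show ?thesis unfolding eq
    by (intro sets.Int borel_open borel_closed c1 o1 o2 c2)
qed

lemma emeas_prod:
  fixes A :: "(real^'n::finite) set" and B :: "real set"
  assumes "A \<in> sets borel" "B \<in> sets borel"
  shows "emeasure lborel (A \<times> B) = emeasure lborel A * emeasure lborel B"
proof -
  have "emeasure lborel (A \<times> B) = emeasure (lborel \<Otimes>\<^sub>M lborel) (A \<times> B)"
    by (simp add: lborel_prod)
  also have "\<dots> = emeasure lborel A * emeasure lborel B"
    using assms by (intro lborel.emeasure_pair_measure_Times) auto
  finally show ?thesis .
qed



lemma emeas_box_cart:
  fixes a b :: "real^'n::finite"
  assumes "\<And>i. b$i - a$i = r" "0 \<le> r"
  shows "emeasure lborel (box a b) = ennreal (r ^ CARD('n))"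
    and "emeasure lborel (cbox a b) = ennreal (r ^ CARD('n))"
proof -
  have "\<forall>i. a$i \<le> b$i" using assms by (metis diff_ge_0_iff_ge)
  then have le: "\<forall>x\<in>(Basis::(real^'n) set). a \<bullet> x \<le> b \<bullet> x"
    by (auto simp: Basis_vec_def inner_axis)
  have pr: "(\<Prod>x\<in>Basis. (b - a) \<bullet> x) = r ^ CARD('n)"
    by (rule prodB) (use assms in simp)
  show "emeasure lborel (box a b) = ennreal (r ^ CARD('n))"
    unfolding emeasure_lborel_box_eq using le pr by simp
  show "emeasure lborel (cbox a b) = ennreal (r ^ CARD('n))"
    unfolding emeasure_lborel_cbox_eq using le pr by simp
qed

lemma measQ:
  fixes c :: "real^'n::finite"
  assumes r: "0 < r" and tt: "t1 < t2"
    and Q'd: "Q' = {y. \<forall>i. - (1/2) * r \<le> y $ i - c $ i \<and> y $ i - c $ i < (1/2) * r}"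
  shows "measure lebesgue (cyl Q' t1 t2) = r ^ CARD('n) * (t2 - t1)"
    and "cyl Q' t1 t2 \<in> sets lebesgue"
proof -
  define a :: "real^'n" where "a = (\<chi> i. c$i - r/2)"
  define b :: "real^'n" where "b = (\<chi> i. c$i + r/2)"
  have Qe: "cyl Q' t1 t2 = {z. (\<forall>i. (c$i - r/2) \<le> fst z $ i \<and> fst z $ i < c$i + r/2) \<and> t1 < snd z \<and> snd z \<le> t2}"
  proof -
    have *: "(- (1/2) * r \<le> y - cc \<and> y - cc < (1/2) * r) \<longleftrightarrow> (cc - r/2 \<le> y \<and> y < cc + r/2)" for y cc :: real
      by auto
    show ?thesis unfolding cyl_def Q'd by (auto simp only: * mem_Times_iff mem_Collect_eq greaterThanAtMost_iff fst_conv snd_conv)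
  qed
  have Qb: "cyl Q' t1 t2 \<in> sets borel" unfolding Qe by (rule Qborel)
  have sub1: "box a b \<times> {t1<..<t2} \<subseteq> cyl Q' t1 t2"
    unfolding Qe by (auto simp: mem_box_cart a_def b_def) (meson less_imp_le)
  have sub2: "cyl Q' t1 t2 \<subseteq> cbox a b \<times> {t1..t2}"
    unfolding Qe by (auto simp: mem_box_cart a_def b_def less_imp_le)
  have ba: "\<And>i. b$i - a$i = r" by (simp add: a_def b_def)
  have e1: "emeasure lborel (box a b \<times> {t1<..<t2}) = ennreal (r ^ CARD('n) * (t2 - t1))"
    using emeas_box_cart(1)[OF ba] r tt by (simp add: emeas_prod ennreal_mult)
  have e2: "emeasure lborel (cbox a b \<times> {t1..t2}) = ennreal (r ^ CARD('n) * (t2 - t1))"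
    using emeas_box_cart(2)[OF ba] r tt by (simp add: emeas_prod ennreal_mult)
  have "emeasure lborel (cyl Q' t1 t2) = ennreal (r ^ CARD('n) * (t2 - t1))"
  proof (rule antisym)
    show "emeasure lborel (cyl Q' t1 t2) \<le> ennreal (r ^ CARD('n) * (t2 - t1))"
      using emeasure_mono[OF sub2, of lborel] e2
      by (simp add: borel_closed closed_Times closed_cbox)
    show "ennreal (r ^ CARD('n) * (t2 - t1)) \<le> emeasure lborel (cyl Q' t1 t2)"
      using emeasure_mono[OF sub1, of lborel] e1 Qb by simp
  qed
  moreover have "emeasure lebesgue (cyl Q' t1 t2) = emeasure lborel (cyl Q' t1 t2)"
    using Qb by simp
  ultimately show "measure lebesgue (cyl Q' t1 t2) = r ^ CARD('n) * (t2 - t1)"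
    unfolding measure_def using r tt by simp
  show "cyl Q' t1 t2 \<in> sets lebesgue" using Qb by simp
qed



lemma pbound:
  fixes p y c :: "real^'n::finite"
  assumes p: "\<And>i. \<bar>p$i\<bar> \<le> \<delta>" and y: "\<And>i. \<bar>y$i - c$i\<bar> \<le> r/2"
  shows "\<bar>p \<bullet> (y - c)\<bar> \<le> real CARD('n) * \<delta> * (r/2)"
proof -
  have "\<bar>p \<bullet> (y - c)\<bar> = \<bar>\<Sum>i\<in>UNIV. p$i * (y$i - c$i)\<bar>" by (simp add: inner_vec_def)
  also have "\<dots> \<le> (\<Sum>i\<in>UNIV. \<bar>p$i * (y$i - c$i)\<bar>)" by (rule sum_abs)
  also have "\<dots> \<le> (\<Sum>i\<in>(UNIV::'n set). \<delta> * (r/2))"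
  proof (rule sum_mono)
    fix i :: 'n
    have "\<bar>p$i * (y$i - c$i)\<bar> = \<bar>p$i\<bar> * \<bar>y$i - c$i\<bar>" by (simp add: abs_mult)
    also have "\<dots> \<le> \<delta> * (r/2)" by (rule mult_mono[OF p y]) (use p[of i] in auto)
    finally show "\<bar>p$i * (y$i - c$i)\<bar> \<le> \<delta> * (r/2)" .
  qed
  also have "\<dots> = real CARD('n) * \<delta> * (r/2)" by simp
  finally show ?thesis .
qed

lemma leb_outer_ge:
  assumes "A \<in> sets borel" "A \<subseteq> S"
  shows "enn2ereal (emeasure lborel A) \<le> leb_outer S"
proof -
  have "emeasure lborel A \<le> (INF T\<in>{T \<in> sets lebesgue. S \<subseteq> T}. emeasure lebesgue T)"
  proof (rule INF_greatest)
    fix T assume T: "T \<in> {T \<in> sets lebesgue. S \<subseteq> T}"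
    have "emeasure lborel A = emeasure lebesgue A" using assms(1) by simp
    also have "\<dots> \<le> emeasure lebesgue T" using T assms(2) by (intro emeasure_mono) auto
    finally show "emeasure lborel A \<le> emeasure lebesgue T" .
  qed
  then show ?thesis unfolding leb_outer_def by (simp add: less_eq_ennreal.rep_eq)
qed

lemma shear_measure:
  fixes c :: "real^'n::finite" and PB :: "(real^'n) set"
  assumes PB: "PB \<in> sets borel" and lh: "lo \<le> hi"
  shows "emeasure lborel {(p,h). p \<in> PB \<and> lo < h + p \<bullet> c \<and> h + p \<bullet> c < hi}
     = ennreal (hi - lo) * emeasure lborel PB"
proof -
  define A where "A = {(p,h). p \<in> PB \<and> lo < h + p \<bullet> c \<and> h + p \<bullet> c < hi}"
  have Ae: "A = (PB \<times> UNIV) \<inter> {z. lo < snd z + fst z \<bullet> c} \<inter> {z. snd z + fst z \<bullet> c < hi}"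
    unfolding A_def by auto
  have PBU: "PB \<times> UNIV \<in> sets (borel :: ((real^'n) \<times> real) measure)"
    by (rule borel_Times[OF PB]) simp
  have "A \<in> sets borel" unfolding Ae
    by (intro sets.Int PBU borel_open open_Collect_less continuous_intros)
  then have As: "A \<in> sets (lborel \<Otimes>\<^sub>M lborel)" by (metis lborel_prod sets_lborel)
  have sl: "Pair p -` A = (if p \<in> PB then {lo - p \<bullet> c <..< hi - p \<bullet> c} else {})" for p
    unfolding A_def by (auto simp: algebra_simps)
  have "emeasure lborel A = emeasure (lborel \<Otimes>\<^sub>M lborel) A" by (simp add: lborel_prod)
  also have "\<dots> = (\<integral>\<^sup>+p. emeasure lborel (Pair p -` A) \<partial>lborel)"
    by (rule lborel.emeasure_pair_measure_alt[OF As])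
  also have "\<dots> = (\<integral>\<^sup>+p. ennreal (hi - lo) * indicator PB p \<partial>lborel)"
    by (intro nn_integral_cong) (use lh in \<open>auto simp: sl\<close>)
  also have "\<dots> = ennreal (hi - lo) * emeasure lborel PB"
    using PB by (intro nn_integral_cmult_indicator) simp
  finally show ?thesis unfolding A_def .
qed



lemma core:
  fixes u :: "(real^'n::finite) \<times> real \<Rightarrow> real" and c :: "real^'n"
  assumes r: "0 < r" and tt: "t1 < t2"
    and Q'd: "Q' = {y. \<forall>i. - (1/2) * r \<le> y $ i - c $ i \<and> y $ i - c $ i < (1/2) * r}"
    and cont: "continuous_on (closure (cyl Q' t1 t2)) u"
    and gap: "Inf (u ` cyl Q' t1 t2) < Inf (u ` par_bdry Q' t1 t2)"
  shows "ereal ((Inf (u ` par_bdry Q' t1 t2) - Inf (u ` cyl Q' t1 t2)) ^ (CARD('n)+1)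
           / (4 * (2 * real CARD('n)) ^ CARD('n) * r ^ CARD('n)))
         \<le> leb_outer (par_subdiff_set (cyl Q' t1 t2) (cyl Q' t1 t2) (mon_env (cyl Q' t1 t2) u))"
proof -
  define Q where "Q = cyl Q' t1 t2"
  define PB where "PB = par_bdry Q' t1 t2"
  define a :: "real^'n" where "a = (\<chi> i. c$i - r/2)"
  define b :: "real^'n" where "b = (\<chi> i. c$i + r/2)"
  have Qe: "Q' = {y. \<forall>i. c$i - r/2 \<le> y$i \<and> y$i < c$i + r/2}"
  proof -
    have *: "(- (1/2) * r \<le> y - cc \<and> y - cc < (1/2) * r) \<longleftrightarrow> (cc - r/2 \<le> y \<and> y < cc + r/2)" for y cc :: real
      by auto
    show ?thesis unfolding Q'd by (simp only: *)
  qed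
  have Qc: "Q = Q' \<times> {t1<..t2}" unfolding Q_def cyl_def ..
  have bQ': "box a b \<subseteq> Q'" unfolding Qe by (auto simp: mem_box_cart a_def b_def) (meson less_imp_le)
  have Q'cb: "Q' \<subseteq> cbox a b" unfolding Qe by (auto simp: mem_box_cart a_def b_def less_imp_le)
  have cbox_ne: "box a b \<noteq> {}"
  proof -
    have "c \<in> box a b" using r by (simp add: mem_box_cart a_def b_def)
    then show ?thesis by auto
  qed
  have clQ': "closure Q' = cbox a b"
  proof
    show "closure Q' \<subseteq> cbox a b" by (rule closure_minimal[OF Q'cb closed_cbox])
    show "cbox a b \<subseteq> closure Q'" using closure_mono[OF bQ'] closure_box[OF cbox_ne] by simp
  qed
  define K where "K = cbox a b \<times> {t1..t2}"
  have KQ: "K \<subseteq> closure Q"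
  proof -
    have "box a b \<times> {t1<..<t2} \<subseteq> Q" unfolding Qc using bQ' by auto
    then have "closure (box a b \<times> {t1<..<t2}) \<subseteq> closure Q" by (rule closure_mono)
    moreover have "closure (box a b \<times> {t1<..<t2}) = K"
      unfolding K_def closure_Times closure_box[OF cbox_ne] using tt by simp
    ultimately show ?thesis by simp
  qed
  have QK: "Q \<subseteq> K" unfolding Qc K_def using Q'cb by auto
  have frQ': "frontier Q' \<subseteq> cbox a b" using clQ' by (auto simp: frontier_def)
  have PBK: "PB \<subseteq> K" unfolding PB_def par_bdry_def K_def using Q'cb frQ' tt by auto
  have Kc: "compact K" unfolding K_def by (intro compact_Times compact_cbox compact_Icc)
  have contK: "continuous_on K u" using cont KQ unfolding Q_def by (rule continuous_on_subset)
  have bddK: "bdd_below (u ` K)"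
    by (rule bounded_imp_bdd_below[OF compact_imp_bounded[OF compact_continuous_image[OF contK Kc]]])
  have bddQ: "bdd_below (u ` Q)" by (rule bdd_below_mono[OF bddK]) (use QK in auto)
  have bddPB: "bdd_below (u ` PB)" by (rule bdd_below_mono[OF bddK]) (use PBK in auto)
  have cQ': "c \<in> Q'" using r unfolding Qe by auto
  have Qne: "(c,t2) \<in> Q" unfolding Qc using cQ' tt by auto
  define m where "m = Inf (u ` Q)"
  define B where "B = Inf (u ` PB)"
  define M where "M = B - m"
  have Mpos: "M > 0" using gap unfolding M_def m_def B_def Q_def PB_def by simp
  have uB: "B \<le> u z" if "z \<in> PB" for z unfolding B_def using bddPB that by (auto intro: cInf_lower)
  have outK: "B \<le> u z" if zK: "z \<in> K" and zQ: "z \<notin> Q" for z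
  proof -
    obtain y s where z: "z = (y,s)" by force
    have yc: "y \<in> cbox a b" and s: "t1 \<le> s" "s \<le> t2" using zK z unfolding K_def by auto
    have fr: "y \<in> frontier Q'" if "y \<notin> Q'"
      using that yc clQ' interior_subset[of Q'] by (auto simp: frontier_def)
    show ?thesis
    proof (cases "s < t2")
      case True
      have "z \<in> PB"
      proof (cases "y \<in> Q'")
        case True
        then have "s = t1" using zQ z s \<open>s < t2\<close> unfolding Qc by auto
        then show ?thesis unfolding PB_def par_bdry_def using True z by auto
      next
        case False
        then show ?thesis unfolding PB_def par_bdry_def using fr z s True by auto
      qed
      then show ?thesis by (rule uB)
    next
      case False
      then have st: "s = t2" using s by simp
      then have yQ: "y \<notin> Q'" using zQ z tt unfolding Qc by auto
      have ts: "t1 < s" using tt st by simp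
      show ?thesis unfolding z
      proof (rule TL[OF contK _ ts])
        show "(y,s) \<in> K" using zK z by simp
        fix s' assume s': "t1 < s'" "s' < s"
        have "(y,s') \<in> PB" unfolding PB_def par_bdry_def using fr[OF yQ] s' st by auto
        then show "(y,s') \<in> K \<and> B \<le> u (y,s')" using PBK uB by auto
      qed
    qed
  qed
  obtain z0 where z0: "z0 \<in> Q" "u z0 < m + M/8"
  proof -
    have "Inf (u ` Q) < m + M/8" using Mpos unfolding m_def by simp
    then obtain v where "v \<in> u ` Q" "v < m + M/8" using cInf_lessD[of "u ` Q"] Qne by blast
    then show ?thesis using that by auto
  qed
  define d where "d = real CARD('n)"
  have dpos: "d > 0" unfolding d_def by simp
  define \<delta> where "\<delta> = M / (4 * d * r)"
  have \<delta>pos: "\<delta> > 0" unfolding \<delta>_def using Mpos dpos r by simp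
  define PBox :: "(real^'n) set" where "PBox = box (\<chi> i. - \<delta>) (\<chi> i. \<delta>)"
  have pb: "\<bar>p \<bullet> (y - c)\<bar> \<le> M/8" if "p \<in> PBox" "y \<in> cbox a b" for p y
  proof -
    have "\<bar>p \<bullet> (y - c)\<bar> \<le> real CARD('n) * \<delta> * (r/2)"
    proof (rule pbound)
      fix i show "\<bar>p$i\<bar> \<le> \<delta>" using that(1) unfolding PBox_def mem_box_cart
        by (simp add: abs_le_iff) (metis less_imp_le minus_less_iff)
      show "\<bar>y$i - c$i\<bar> \<le> r/2" using that(2) unfolding mem_box_cart a_def b_def
        by (simp add: abs_le_iff) (smt (verit) field_sum_of_halves)
    qed
    also have "\<dots> = M/8" unfolding \<delta>_def d_def using r dpos unfolding d_def by (simp add: field_simps)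
    finally show ?thesis .
  qed
  define A where "A = {(p,h). p \<in> PBox \<and> m + M/4 < h + p \<bullet> c \<and> h + p \<bullet> c < m + M/2}"
  have AP: "A \<subseteq> par_subdiff_set Q Q (mon_env Q u)"
  proof
    fix z assume "z \<in> A"
    then obtain p h where z: "z = (p,h)" and p: "p \<in> PBox" and h: "m + M/4 < h + p \<bullet> c" "h + p \<bullet> c < m + M/2"
      unfolding A_def by auto
    have "(p, (h + p \<bullet> c) - p \<bullet> c) \<in> par_subdiff_set Q Q (mon_env Q u)"
    proof (rule touch[OF Kc QK contK z0(1)])
      have "fst z0 \<in> cbox a b" using z0(1) QK unfolding K_def by auto
      then have "\<bar>p \<bullet> (fst z0 - c)\<bar> \<le> M/8" by (rule pb[OF p])
      then show "u z0 - p \<bullet> (fst z0 - c) \<le> h + p \<bullet> c" using z0(2) h by linarith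
      fix w assume w: "w \<in> K" "w \<notin> Q"
      have "fst w \<in> cbox a b" using w(1) unfolding K_def by auto
      then have "\<bar>p \<bullet> (fst w - c)\<bar> \<le> M/8" by (rule pb[OF p])
      moreover have "B \<le> u w" by (rule outK[OF w])
      ultimately have "p \<bullet> (fst w - c) \<le> M/8" "B \<le> u w" using abs_le_D1 by blast+
      then show "h + p \<bullet> c < u w - p \<bullet> (fst w - c)" using h Mpos M_def by linarith
    next
      fix y s assume "(y,s) \<in> Q"
      then show "\<exists>a<s. \<forall>s'. a < s' \<and> s' < s \<longrightarrow> (y, s') \<in> Q" unfolding Qc by auto
    qed
    then show "z \<in> par_subdiff_set Q Q (mon_env Q u)" using z by simp
  qed
  have PBoxb: "PBox \<in> sets borel" unfolding PBox_def by simp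
  have eA: "emeasure lborel A = ennreal (M/4) * ennreal ((2*\<delta>) ^ CARD('n))"
  proof -
    have "emeasure lborel A = ennreal ((m + M/2) - (m + M/4)) * emeasure lborel PBox"
      unfolding A_def by (rule shear_measure[OF PBoxb]) (use Mpos in simp)
    also have "emeasure lborel PBox = ennreal ((2*\<delta>) ^ CARD('n))"
      unfolding PBox_def by (rule emeas_box_cart(1)) (use \<delta>pos in auto)
    finally show ?thesis by simp
  qed
  have Ab: "A \<in> sets borel"
  proof -
    have eq: "A = (PBox \<times> UNIV) \<inter> {z. m + M/4 < snd z + fst z \<bullet> c} \<inter> {z. snd z + fst z \<bullet> c < m + M/2}"
      unfolding A_def by auto
    have 1: "PBox \<times> UNIV \<in> sets (borel :: ((real^'n) \<times> real) measure)"
      by (rule borel_Times[OF PBoxb]) simp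
    have 2: "{z::(real^'n)\<times>real. m + M/4 < snd z + fst z \<bullet> c} \<in> sets borel"
      by (intro borel_open open_Collect_less continuous_intros)
    have 3: "{z::(real^'n)\<times>real. snd z + fst z \<bullet> c < m + M/2} \<in> sets borel"
      by (intro borel_open open_Collect_less continuous_intros)
    show ?thesis unfolding eq by (intro sets.Int 1 2 3)
  qed
  have "enn2ereal (emeasure lborel A) \<le> leb_outer (par_subdiff_set Q Q (mon_env Q u))"
    by (rule leb_outer_ge[OF Ab AP])
  moreover have "enn2ereal (emeasure lborel A) = ereal (M/4 * (2*\<delta>) ^ CARD('n))"
    unfolding eA using Mpos \<delta>pos by (simp add: ennreal_mult[symmetric])
  moreover have "M/4 * (2*\<delta>) ^ CARD('n) = M ^ (CARD('n)+1) / (4 * (2 * d) ^ CARD('n) * r ^ CARD('n))"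
  proof -
    have "2*\<delta> = M / (2*d*r)" unfolding \<delta>_def using dpos r by (simp add: field_simps)
    then have "(2*\<delta>) ^ CARD('n) = M ^ CARD('n) / ((2*d) ^ CARD('n) * r ^ CARD('n))"
      by (simp add: power_divide power_mult_distrib)
    then show ?thesis using dpos r by (simp add: field_simps)
  qed
  ultimately have "ereal (M ^ (CARD('n)+1) / (4 * (2 * d) ^ CARD('n) * r ^ CARD('n)))
     \<le> leb_outer (par_subdiff_set Q Q (mon_env Q u))" by metis
  then show ?thesis unfolding M_def B_def m_def Q_def PB_def d_def .
qed



lemma root_step:
  fixes M K R X \<mu> :: real and k :: nat
  assumes M: "0 < M" and K: "0 < K" and R: "0 < R" and X: "X \<le> \<mu>"
    and Xd: "X = M ^ (k+1) / (K * R ^ (k+1))"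
  shows "M \<le> K powr (1 / real (k+1)) * R * \<mu> powr (1 / real (k+1))"
proof -
  define e where "e = 1 / real (k+1)"
  have X0: "0 \<le> X" unfolding Xd using M K R by simp
  have Meq: "M ^ (k+1) = X * K * R ^ (k+1)" unfolding Xd using K R by simp
  have pw: "y ^ (k+1) = y powr (real (k+1))" if "0 < y" for y :: real
    using powr_realpow[OF that, of "k+1"] by (simp only:)
  have pe: "(y powr (real (k+1))) powr e = y" if "0 < y" for y :: real
    using that by (simp add: e_def powr_powr del: of_nat_Suc)
  have "M = (M ^ (k+1)) powr e" using pw[OF M] pe[OF M] by simp
  also have "\<dots> = X powr e * K powr e * (R ^ (k+1)) powr e"
    unfolding Meq using X0 K R by (simp add: powr_mult)
  also have "(R ^ (k+1)) powr e = R" using pw[OF R] pe[OF R] by simp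
  also have "X powr e * K powr e * R \<le> \<mu> powr e * K powr e * R"
    using X X0 K R by (intro mult_right_mono powr_mono2) (auto simp: e_def)
  finally show ?thesis unfolding e_def by (simp add: mult_ac)
qed

theorem lemma2p1:
  "\<exists>C::real. \<forall>(lam::real) Lam (F::'n::finite coeff) (z::(real^'n) \<times> real) (n::int) u.
     0 < lam \<longrightarrow> lam \<le> Lam \<longrightarrow> F \<in> Omega lam Lam \<longrightarrow> u \<in> Ssup (Gcyl n z) F \<longrightarrow>
     ereal (Inf (u ` Gpar_bdry n z)) \<le> ereal (Inf (u ` Gcyl n z))
       + (if mu (Gcyl n z) F = \<infinity> then \<infinity>
          else ereal (C * 3 powi (2*n) * real_of_ereal (mu (Gcyl n z) F) powr (1 / real (CARD('n) + 1))))"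
proof (intro exI allI impI)
  define K where "K = 4 * (2 * real CARD('n)) ^ CARD('n)"
  have Kpos: "K > 0" unfolding K_def by simp
  define C where "C = K powr (1 / real (CARD('n) + 1))"
  have Cpos: "C \<ge> 0" unfolding C_def by simp
  fix lam Lam :: real and F :: "'n coeff" and z :: "(real^'n) \<times> real" and n :: int and u
  assume u: "u \<in> Ssup (Gcyl n z) F"
  obtain x t where zxt: "z = (x,t)" by force
  define r :: real where "r = 3 powi n"
  have r: "r > 0" unfolding r_def by simp
  have r2: "3 powi (2*n) = r^2" unfolding r_def by (simp add: power_int_power' mult.commute)
  define t1 where "t1 = Gtime n t"
  define t2 where "t2 = t1 + r^2"
  have tt: "t1 < t2" unfolding t2_def using r by simp
  define c where "c = Gcenter n x"
  define Q' where "Q' = Gsp n x"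
  have Q'd: "Q' = {y. \<forall>i. - (1/2) * r \<le> y $ i - c $ i \<and> y $ i - c $ i < (1/2) * r}"
    unfolding Q'_def Gsp_def c_def r_def ..
  have Gc: "Gcyl n z = cyl Q' t1 t2" unfolding Gcyl_def zxt Q'_def t1_def t2_def r2 by simp
  have Gp: "Gpar_bdry n z = par_bdry Q' t1 t2" unfolding Gpar_bdry_def zxt Q'_def t1_def t2_def r2 by simp
  define Q where "Q = cyl Q' t1 t2"
  define m where "m = Inf (u ` Q)"
  define B where "B = Inf (u ` par_bdry Q' t1 t2)"
  define L where "L = leb_outer (par_subdiff_set Q Q (mon_env Q u))"
  have uQ: "u \<in> Ssup Q F" using u Gc Q_def by simp
  have LS: "L \<le> (SUP v\<in>Ssup Q F. leb_outer (par_subdiff_set Q Q (mon_env Q v)))"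
    unfolding L_def using uQ by (rule SUP_upper)
  have measQ': "measure lebesgue Q = r ^ CARD('n) * r^2"
    unfolding Q_def using measQ(1)[OF r tt Q'd] t2_def by simp
  have muQ: "mu Q F = ereal (1 / (r ^ CARD('n) * r^2)) * (SUP v\<in>Ssup Q F. leb_outer (par_subdiff_set Q Q (mon_env Q v)))"
    unfolding mu_def measQ' ..
  have Lnn: "0 \<le> L" unfolding L_def leb_outer_def by simp
  have mu_ge: "ereal (1 / (r ^ CARD('n) * r^2)) * L \<le> mu Q F"
    unfolding muQ using r by (intro ereal_mult_left_mono LS) simp
  have mu_nn: "0 \<le> mu Q F" using mu_ge Lnn r
  proof -
    have "0 \<le> ereal (1 / (r ^ CARD('n) * r^2)) * L" using Lnn r by (intro ereal_0_le_mult) simp_all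
    then show ?thesis using mu_ge by (rule order_trans)
  qed
  show "ereal (Inf (u ` Gpar_bdry n z)) \<le> ereal (Inf (u ` Gcyl n z))
       + (if mu (Gcyl n z) F = \<infinity> then \<infinity>
          else ereal (C * 3 powi (2*n) * real_of_ereal (mu (Gcyl n z) F) powr (1 / real (CARD('n) + 1))))"
  proof (cases "mu Q F = \<infinity>")
    case True
    then show ?thesis using Gc Q_def by simp
  next
    case False
    define \<mu> where "\<mu> = real_of_ereal (mu Q F)"
    have mue: "mu Q F = ereal \<mu>" unfolding \<mu>_def using False mu_nn
      by (cases "mu Q F") auto
    have goal: "B \<le> m + C * r^2 * \<mu> powr (1 / real (CARD('n) + 1))"
    proof (cases "B \<le> m")
      case True
      have "0 \<le> C * r^2 * \<mu> powr (1 / real (CARD('n) + 1))" using Cpos by simp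
      then show ?thesis using True by linarith
    next
      case False
      then have gap: "Inf (u ` cyl Q' t1 t2) < Inf (u ` par_bdry Q' t1 t2)"
        unfolding m_def B_def Q_def by simp
      have cont: "continuous_on (closure (cyl Q' t1 t2)) u" using uQ unfolding Ssup_def Q_def by simp
      have core': "ereal ((B - m) ^ (CARD('n)+1) / (K * r ^ CARD('n))) \<le> L"
        using core[OF r tt Q'd cont gap] unfolding L_def B_def m_def Q_def K_def by simp
      define X where "X = (B - m) ^ (CARD('n)+1) / (K * (r^2) ^ (CARD('n)+1))"
      have pw: "(r^2)^(CARD('n)+1) = r ^ CARD('n) * r^2 * r ^ CARD('n)"
      proof -
        have "(r^2)^(CARD('n)+1) = r^(2*(CARD('n)+1))" by (rule power_mult[symmetric])
        also have "2*(CARD('n)+1) = CARD('n) + 2 + CARD('n)" by simp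
        finally show ?thesis by (simp only: power_add)
      qed
      have "X = 1 / (r ^ CARD('n) * r^2) * ((B - m) ^ (CARD('n)+1) / (K * r ^ CARD('n)))"
        unfolding X_def pw using r by (simp add: power2_eq_square divide_simps mult_ac)
      then have "ereal X = ereal (1 / (r ^ CARD('n) * r^2)) * ereal ((B - m) ^ (CARD('n)+1) / (K * r ^ CARD('n)))"
        by simp
      also have "\<dots> \<le> ereal (1 / (r ^ CARD('n) * r^2)) * L"
        using r by (intro ereal_mult_left_mono core') simp
      also have "\<dots> \<le> ereal \<mu>" using mu_ge mue by simp
      finally have Xmu: "X \<le> \<mu>" by simp
      have "B - m \<le> K powr (1 / real (CARD('n)+1)) * r^2 * \<mu> powr (1 / real (CARD('n)+1))"
        by (rule root_step[OF _ Kpos _ Xmu X_def]) (use False r in auto)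
      then show ?thesis unfolding C_def by simp
    qed
    show ?thesis unfolding Gc Gp r2 using goal False mue
      unfolding Q_def m_def B_def by simp
  qed
qed


end
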